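(* Let $E_0>0$, $n\ge0$ real, $C>0$, and let $\phi:(-\infty,1]\to\mathbb R_+$ be continuous on $[0,1]$ with $\phi(x)=0$ for $x<0$ and $\lim_{x\to0^+}x^{-n}\phi(x)=C$. With $\epsilon=E_0/V-1$, as $V\to E_0^-$, $\varrho(V)\sim4\sqrt2\,\pi C A_n\,\epsilon^{n+3/2}$ and $p(V)\sim2^{3/2}\tfrac{4}{3}\pi C B_n\,\epsilon^{n+5/2}$, where $A_n=\frac{\sqrt\pi\,\Gamma(n+1)}{2\Gamma(n+5/2)}$, $B_n=\frac{3\sqrt\pi\,\Gamma(n+1)}{4\Gamma(n+7/2)}$, and $a\sim b$ means $a/b\to1$. In particular $p\sim K\varrho^\gamma$ as $V\to E_0^-$ with $\gamma=\frac{2n+5}{2n+3}$ and $K=\frac23\,(4\sqrt2\pi C)^{-2/(2n+3)}\,B_n\,A_n^{-(2n+5)/(2n+3)}$.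
   Context: For $V\in(0,E_0]$: $\varrho(V)=\frac{4\pi}{V^3}\int_V^{E_0}\phi(1-E/E_0)E^2\sqrt{(E/V)^2-1}\,dE$, $p(V)=\frac{4\pi}{3V}\int_V^{E_0}\phi(1-E/E_0)[(E/V)^2-1]^{3/2}dE$. $\Gamma$ here denotes the Gamma function. *)

theory Defs
  imports "HOL-Analysis.Analysis"
begin

definition rho_fn :: "real \<Rightarrow> (real \<Rightarrow> real) \<Rightarrow> real \<Rightarrow> real" where
  "rho_fn E0 \<phi> V = 4 * pi / V ^ 3 *
     integral {V..E0} (\<lambda>E. \<phi> (1 - E / E0) * E ^ 2 * sqrt ((E / V) ^ 2 - 1))"

definition p_fn :: "real \<Rightarrow> (real \<Rightarrow> real) \<Rightarrow> real \<Rightarrow> real" where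
  "p_fn E0 \<phi> V = 4 * pi / (3 * V) *
     integral {V..E0} (\<lambda>E. \<phi> (1 - E / E0) * ((E / V) ^ 2 - 1) powr (3 / 2))"

definition A_const :: "real \<Rightarrow> real" where
  "A_const n = sqrt pi * Gamma (n + 1) / (2 * Gamma (n + 5 / 2))"

definition B_const :: "real \<Rightarrow> real" where
  "B_const n = 3 * sqrt pi * Gamma (n + 1) / (4 * Gamma (n + 7 / 2))"

end

theory Submission
  imports Defs
begin

lemma unif2:
  fixes K :: "real \<Rightarrow> real \<Rightarrow> real"
  assumes "continuous_on ({0..1} \<times> {0..1}) (\<lambda>p. K (fst p) (snd p))" "\<eta> > 0"
  shows "\<forall>\<^sub>F e in at_right 0. \<forall>x\<in>{0..1}. \<bar>K e x - K 0 x\<bar> < \<eta>"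
proof -
  have "uniformly_continuous_on ({0..1} \<times> {0..1}) (\<lambda>p. K (fst p) (snd p))"
    by (intro compact_uniformly_continuous assms compact_Times compact_Icc)
  then obtain d where d: "d > 0" and
    H: "\<And>p q. p \<in> {0..1} \<times> {0..1} \<Longrightarrow> q \<in> {0..1} \<times> {0..1} \<Longrightarrow> dist q p < d \<Longrightarrow>
        dist (K (fst q) (snd q)) (K (fst p) (snd p)) < \<eta>"
    unfolding uniformly_continuous_on_def using assms(2) by metis
  show ?thesis unfolding eventually_at_right_field
  proof (intro exI[of _ "min d 1"] conjI allI impI ballI)
    fix e x :: real assume e: "0 < e" "e < min d 1" and x: "x \<in> {0..1}"
    have "dist (K (fst (e,x)) (snd (e,x))) (K (fst (0,x)) (snd (0::real,x))) < \<eta>"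
      by (rule H) (use e x in \<open>auto simp: dist_Pair_Pair dist_real_def\<close>)
    then show "\<bar>K e x - K 0 x\<bar> < \<eta>" by (simp add: dist_real_def)
  qed (use d in auto)
qed

lemma int_lim:
  fixes f :: "'a \<Rightarrow> real \<Rightarrow> real"
  assumes "\<forall>\<^sub>F t in F. f t integrable_on {0..1}" "g integrable_on {0..1}"
   "\<And>\<eta>. \<eta> > 0 \<Longrightarrow> \<forall>\<^sub>F t in F. \<forall>x\<in>{0..<1}. \<bar>f t x - g x\<bar> \<le> \<eta>"
  shows "((\<lambda>t. integral {0..1} (f t)) \<longlongrightarrow> integral {0..1} g) F"
proof (rule tendstoI)
  fix e :: real assume e: "e > 0"
  show "\<forall>\<^sub>F t in F. dist (integral {0..1} (f t)) (integral {0..1} g) < e"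
    using assms(1) assms(3)[of "e/2"] e
  proof -
    have A3: "\<forall>\<^sub>F t in F. \<forall>x\<in>{0..<1}. \<bar>f t x - g x\<bar> \<le> e/2" using assms(3)[of "e/2"] e by simp
    show ?thesis using assms(1) A3
  proof eventually_elim
    case (elim t)
    define h where "h x = (if x = 1 then 0 else f t x - g x)" for x
    have hi: "(\<lambda>x. f t x - g x) integrable_on {0..1}"
      using elim assms(2) by (intro integrable_diff)
    have eq: "integral {0..1} h = integral {0..1} (\<lambda>x. f t x - g x)"
      by (rule integral_spike[where S="{1}"]) (auto simp: h_def)
    have hi2: "h integrable_on {0..1}"
      by (rule integrable_spike_finite[where S="{1}", OF _ _ hi]) (auto simp: h_def)
    have "norm (integral {0..1} h) \<le> integral {0..1} (\<lambda>x::real. e/2)"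
      by (rule Henstock_Kurzweil_Integration.integral_norm_bound_integral[where g="\<lambda>x. e/2", OF hi2]) (use elim e in \<open>auto simp: h_def\<close>)
    also have "\<dots> = e/2" by simp
    finally have "\<bar>integral {0..1} (\<lambda>x. f t x - g x)\<bar> \<le> e/2" using eq by simp
    moreover have "integral {0..1} (\<lambda>x. f t x - g x) = integral {0..1} (f t) - integral {0..1} g"
      using elim assms(2) by (intro integral_diff)
    ultimately show ?case using e by (simp add: dist_real_def)
  qed
  qed
qed

lemma subst01:
  fixes f :: "real \<Rightarrow> real"
  assumes "a < b" "((\<lambda>x. f ((b-a)*x + a)) has_integral I) {0..1}"
  shows "(f has_integral ((b-a)*I)) {a..b}"
proof -
  have "((\<lambda>x. f ((b-a) *\<^sub>R x + a)) has_integral (((b-a)*I) /\<^sub>R (b-a) ^ DIM(real)))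
          (cbox ((a - a) /\<^sub>R (b-a)) ((b - a) /\<^sub>R (b-a))) \<longleftrightarrow> (f has_integral ((b-a)*I)) (cbox a b)"
    by (rule has_integral_affinity_iff) (use assms in simp)
  moreover have "inverse (b-a) * ((b-a)*I) = I" using assms by simp
  ultimately show ?thesis using assms by simp
qed

lemma phi_cont:
  assumes "continuous_on {0..1} \<phi>" "e > 0"
  shows "continuous_on {0..1} (\<lambda>x::real. \<phi> (e*(1-x)/(1+e)))"
proof (rule continuous_on_compose2[OF assms(1)])
  show "continuous_on {0..1} (\<lambda>x::real. e*(1-x)/(1+e))" using assms(2)
    by (intro continuous_intros) auto
  show "(\<lambda>x::real. e*(1-x)/(1+e)) ` {0..1} \<subseteq> {0..1}"
  proof
    fix y assume "y \<in> (\<lambda>x::real. e*(1-x)/(1+e)) ` {0..1}"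
    then obtain x where x: "x \<in> {0..1}" "y = e*(1-x)/(1+e)" by auto
    have "e*x \<ge> 0" using x assms(2) by simp
    then have "e*(1-x) \<le> 1 + e" by (simp add: algebra_simps)
    then show "y \<in> {0..1}" unfolding x(2) using x(1) assms(2)
      by (auto simp: divide_le_eq intro!: divide_nonneg_nonneg mult_nonneg_nonneg)
  qed
qed

lemma rho_repr:
  assumes V: "V > 0" and e: "e > 0" and E0: "E0 = V*(1+e)" and phi: "continuous_on {0..1} \<phi>"
  shows "rho_fn E0 \<phi> V = 4*pi * e powr (n+3/2) * integral {0..1}
     (\<lambda>x. \<phi> (e*(1-x)/(1+e)) / e powr n * ((1+e*x)^2 * sqrt (x*(2+e*x))))"
proof -
  define R where "R x = \<phi> (e*(1-x)/(1+e)) / e powr n * ((1+e*x)^2 * sqrt (x*(2+e*x)))" for x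
  define f where "f E = \<phi> (1 - E / E0) * E ^ 2 * sqrt ((E / V) ^ 2 - 1)" for E
  have Rc: "continuous_on {0..1} R" unfolding R_def
    by (intro continuous_intros phi_cont[OF phi e]) (use e in auto)
  then have Ri: "(R has_integral integral {0..1} R) {0..1}"
    using integrable_continuous_interval by blast
  have pt: "f ((E0-V)*x + V) = (V^2 * e powr (n+1/2)) * R x" if x: "x \<in> {0..1}" for x
  proof -
    have E: "(E0-V)*x + V = V*(1+e*x)" using E0 by (simp add: algebra_simps)
    have a0: "V*(1+e*x)/E0 = (1+e*x)/(1+e)" using E0 V by simp
    have a1: "1 - V*(1+e*x)/E0 = e*(1-x)/(1+e)" unfolding a0 using e by (simp add: field_simps)
    have a2: "(V*(1+e*x)/V)^2 - 1 = e * (x*(2+e*x))" using V by (simp add: field_simps power2_eq_square)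
    have a3: "sqrt (e * (x*(2+e*x))) = sqrt e * sqrt (x*(2+e*x))" by (simp add: real_sqrt_mult)
    have a4: "e powr (n+1/2) = e powr n * sqrt e" using e by (simp add: powr_add powr_half_sqrt)
    have "e powr n > 0" using e by simp
    then show ?thesis unfolding f_def R_def E a1 a2 a3 a4
      by (simp add: field_simps power2_eq_square)
  qed
  have "((\<lambda>x. f ((E0-V)*x + V)) has_integral (V^2 * e powr (n+1/2)) * integral {0..1} R) {0..1}"
    by (rule has_integral_eq[OF _ has_integral_mult_right[OF Ri, of "V^2 * e powr (n+1/2)"]]) (simp add: pt)
  from subst01[OF _ this] have "(f has_integral ((E0-V) * ((V^2 * e powr (n+1/2)) * integral {0..1} R))) {V..E0}"
    using E0 V e by (simp add: algebra_simps)
  then have "integral {V..E0} f = (E0-V) * ((V^2 * e powr (n+1/2)) * integral {0..1} R)"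
    by (rule integral_unique)
  then have "rho_fn E0 \<phi> V = 4 * pi / V^3 * ((V*e) * ((V^2 * e powr (n+1/2)) * integral {0..1} R))"
    unfolding rho_fn_def f_def using E0 by (simp add: algebra_simps)
  also have "\<dots> = 4*pi * (e * e powr (n+1/2)) * integral {0..1} R"
    using V by (simp add: field_simps power3_eq_cube power2_eq_square)
  also have "e * e powr (n+1/2) = e powr (n+3/2)"
  proof -
    have "e powr (n+3/2) = e powr (1 + (n+1/2))" by (simp add: algebra_simps)
    also have "\<dots> = e powr 1 * e powr (n+1/2)" by (rule powr_add)
    also have "\<dots> = e * e powr (n+1/2)" using e by simp
    finally show ?thesis by simp
  qed
  finally show ?thesis unfolding R_def .
qed

lemma powr32: "(y::real) \<ge> 0 \<Longrightarrow> y powr (3/2) = y * sqrt y"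
proof -
  assume y: "y \<ge> 0"
  have "y powr (3/2) = y powr (1 + 1/2)" by simp
  also have "\<dots> = y powr 1 * y powr (1/2)" by (rule powr_add)
  finally show ?thesis using y by (simp add: powr_half_sqrt)
qed

lemma p_repr:
  assumes V: "V > 0" and e: "e > 0" and E0: "E0 = V*(1+e)" and phi: "continuous_on {0..1} \<phi>"
  shows "p_fn E0 \<phi> V = 4*pi/3 * e powr (n+5/2) * integral {0..1}
     (\<lambda>x. \<phi> (e*(1-x)/(1+e)) / e powr n * ((x*(2+e*x)) * sqrt (x*(2+e*x))))"
proof -
  define R where "R x = \<phi> (e*(1-x)/(1+e)) / e powr n * ((x*(2+e*x)) * sqrt (x*(2+e*x)))" for x
  define f where "f E = \<phi> (1 - E / E0) * ((E / V) ^ 2 - 1) powr (3/2)" for E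
  have Rc: "continuous_on {0..1} R" unfolding R_def
    by (intro continuous_intros phi_cont[OF phi e]) (use e in auto)
  then have Ri: "(R has_integral integral {0..1} R) {0..1}"
    using integrable_continuous_interval by blast
  have pt: "f ((E0-V)*x + V) = (e powr (n+3/2)) * R x" if x: "x \<in> {0..1}" for x
  proof -
    have E: "(E0-V)*x + V = V*(1+e*x)" using E0 by (simp add: algebra_simps)
    have a0: "V*(1+e*x)/E0 = (1+e*x)/(1+e)" using E0 V by simp
    have a1: "1 - V*(1+e*x)/E0 = e*(1-x)/(1+e)" unfolding a0 using e by (simp add: field_simps)
    have a2: "(V*(1+e*x)/V)^2 - 1 = e * (x*(2+e*x))" using V by (simp add: field_simps power2_eq_square)
    have y: "x*(2+e*x) \<ge> 0" using x e by simp
    have a3: "(e * (x*(2+e*x))) powr (3/2) = e powr (3/2) * ((x*(2+e*x)) * sqrt (x*(2+e*x)))"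
      using y e by (simp add: powr_mult[of e "x*(2+e*x)"] powr32[OF y] del: mult_nonneg_nonneg)
    have a4: "e powr (n+3/2) = e powr n * e powr (3/2)" by (simp add: powr_add)
    have "e powr n > 0" using e by simp
    then show ?thesis unfolding f_def R_def E a1 a2 a3 a4
      by (simp add: field_simps)
  qed
  have "((\<lambda>x. f ((E0-V)*x + V)) has_integral (e powr (n+3/2)) * integral {0..1} R) {0..1}"
    by (rule has_integral_eq[OF _ has_integral_mult_right[OF Ri, of "e powr (n+3/2)"]]) (simp add: pt)
  from subst01[OF _ this] have "(f has_integral ((E0-V) * ((e powr (n+3/2)) * integral {0..1} R))) {V..E0}"
    using E0 V e by (simp add: algebra_simps)
  then have "integral {V..E0} f = (E0-V) * ((e powr (n+3/2)) * integral {0..1} R)"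
    by (rule integral_unique)
  then have "p_fn E0 \<phi> V = 4 * pi / (3*V) * ((V*e) * ((e powr (n+3/2)) * integral {0..1} R))"
    unfolding p_fn_def f_def using E0 by (simp add: algebra_simps)
  also have "\<dots> = 4*pi/3 * (e * e powr (n+3/2)) * integral {0..1} R"
    using V by (simp add: field_simps)
  also have "e * e powr (n+3/2) = e powr (n+5/2)"
  proof -
    have "e powr (n+5/2) = e powr (1 + (n+3/2))" by (simp add: algebra_simps)
    also have "\<dots> = e powr 1 * e powr (n+3/2)" by (rule powr_add)
    also have "\<dots> = e * e powr (n+3/2)" using e by simp
    finally show ?thesis by simp
  qed
  finally show ?thesis unfolding R_def .
qed

lemma Gamma32: "Gamma (3/2::real) = sqrt pi / 2"
proof -
  have "(1/2::real) \<notin> \<int>\<^sub>\<le>\<^sub>0" by (auto elim!: nonpos_Ints_cases)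
  from Gamma_plus1[OF this] show ?thesis by (simp add: Gamma_one_half_real)
qed

lemma Gamma52: "Gamma (5/2::real) = 3 * sqrt pi / 4"
proof -
  have "(3/2::real) \<notin> \<int>\<^sub>\<le>\<^sub>0" by (auto elim!: nonpos_Ints_cases)
  from Gamma_plus1[OF this] show ?thesis by (simp add: Gamma32)
qed

lemma Beta_A: "n \<ge> 0 \<Longrightarrow> Beta (3/2) (n+1) = A_const n"
  unfolding Beta_def A_const_def by (simp add: Gamma32 add_ac)

lemma Beta_B: "n \<ge> 0 \<Longrightarrow> Beta (5/2) (n+1) = B_const n"
  unfolding Beta_def B_const_def by (simp add: Gamma52 add_ac)

lemma A_pos: "n \<ge> 0 \<Longrightarrow> A_const n > 0"
  unfolding A_const_def by (intro divide_pos_pos mult_pos_pos Gamma_real_pos) auto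

lemma B_pos: "n \<ge> 0 \<Longrightarrow> B_const n > 0"
  unfolding B_const_def by (intro divide_pos_pos mult_pos_pos Gamma_real_pos) auto

definition gfun :: "(real \<Rightarrow> real) \<Rightarrow> real \<Rightarrow> real \<Rightarrow> real \<Rightarrow> real" where
  "gfun \<phi> n C y = (if y = 0 then C else \<phi> y / y powr n)"

lemma g_cont:
  assumes phi: "continuous_on {0..1} \<phi>" and lim: "((\<lambda>x. \<phi> x / x powr n) \<longlongrightarrow> C) (at_right 0)"
  shows "continuous_on {0..1} (gfun \<phi> n C)"
  unfolding continuous_on_eq_continuous_within
proof
  fix x :: real assume x: "x \<in> {0..1}"
  show "continuous (at x within {0..1}) (gfun \<phi> n C)"
  proof (cases "x = 0")
    case True
    have ev: "\<forall>\<^sub>F y in at_right 0. \<phi> y / y powr n = gfun \<phi> n C y"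
      using eventually_at_right_less[of "0::real"] by eventually_elim (auto simp: gfun_def)
    have "(gfun \<phi> n C \<longlongrightarrow> C) (at_right 0)"
      using tendsto_cong[OF ev] lim by simp
    then have "(gfun \<phi> n C \<longlongrightarrow> gfun \<phi> n C 0) (at_right 0)" by (simp add: gfun_def)
    then show ?thesis using True by (simp add: continuous_within at_within_Icc_at_right)
  next
    case False
    then have xp: "x > 0" using x by simp
    have c1: "continuous_on {0<..1} (\<lambda>y. \<phi> y / y powr n)"
      by (intro continuous_intros continuous_on_subset[OF phi]) auto
    have c2: "continuous_on {0<..1} (gfun \<phi> n C)"
      by (rule continuous_on_cong[THEN iffD1, OF refl _ c1]) (auto simp: gfun_def)
    have "continuous (at x within {0<..1}) (gfun \<phi> n C)"
      using c2 xp x unfolding continuous_on_eq_continuous_within by auto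
    moreover have "at x within {0..1} = at x within {0<..1}"
      by (rule at_within_nhd[of x "{0<..}"]) (use xp in auto)
    ultimately show ?thesis by simp
  qed
qed

lemma arg_in01: "e \<ge> 0 \<Longrightarrow> x \<in> {0..1} \<Longrightarrow> e*(1-x)/(1+e) \<in> {0..(1::real)}"
proof -
  assume e: "e \<ge> 0" and x: "x \<in> {0..1}"
  have "e*x \<ge> 0" using x e by simp
  then have "e*(1-x) \<le> 1 + e" by (simp add: algebra_simps)
  then show ?thesis using x e
    by (auto simp: divide_le_eq intro!: divide_nonneg_nonneg mult_nonneg_nonneg)
qed

lemma KW_cont:
  assumes g: "continuous_on {0..1} G" and W: "continuous_on ({0..1} \<times> {0..1}) (\<lambda>p. W (fst p) (snd p))"
  shows "continuous_on ({0..1} \<times> {0..(1::real)})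
     (\<lambda>p. G (fst p * (1 - snd p) / (1 + fst p)) * (1 + fst p) powr (-n) * W (fst p) (snd p))"
proof -
  have "continuous_on ({0..1} \<times> {0..(1::real)}) (\<lambda>p. G (fst p * (1 - snd p) / (1 + fst p)))"
  proof (rule continuous_on_compose2[OF g])
    show "continuous_on ({0..1} \<times> {0..(1::real)}) (\<lambda>p. fst p * (1 - snd p) / (1 + fst p))"
      by (intro continuous_intros) (auto simp: add_pos_nonneg)
    show "(\<lambda>p. fst p * (1 - snd p) / (1 + fst p)) ` ({0..1} \<times> {0..1}) \<subseteq> {0..(1::real)}"
      using arg_in01 by auto
  qed
  moreover have "continuous_on ({0..1} \<times> {0..(1::real)}) (\<lambda>p. (1 + fst p) powr (-n))"
    by (intro continuous_intros) auto
  ultimately show ?thesis using W by (intro continuous_intros) auto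
qed

lemma g_rel:
  assumes e: "e > 0" and x: "0 \<le> x" "x < 1"
  shows "\<phi> (e*(1-x)/(1+e)) / e powr n = gfun \<phi> n C (e*(1-x)/(1+e)) * (1+e) powr (-n) * (1-x) powr n"
proof -
  define y where "y = e*(1-x)/(1+e)"
  have y: "y > 0" using e x by (simp add: y_def)
  have "y powr n = e powr n * (1-x) powr n / (1+e) powr n"
    using e x by (simp add: y_def powr_divide powr_mult)
  moreover have "(1+e) powr (-n) = 1 / (1+e) powr n" using e by (simp add: powr_minus divide_inverse)
  moreover have "(1-x) powr n > 0" "e powr n > 0" "(1+e) powr n > 0" using e x by auto
  ultimately have "gfun \<phi> n C y * (1+e) powr (-n) * (1-x) powr n = \<phi> y / e powr n"
    using y by (simp add: gfun_def)
  then show ?thesis unfolding y_def by simp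
qed

lemma int_R_lim:
  fixes W :: "real \<Rightarrow> real \<Rightarrow> real"
  assumes phi: "continuous_on {0..1} \<phi>" and lim: "((\<lambda>x. \<phi> x / x powr n) \<longlongrightarrow> C) (at_right 0)"
    and n: "n \<ge> 0"
    and W: "continuous_on ({0..1} \<times> {0..1}) (\<lambda>p. W (fst p) (snd p))"
    and gi: "(\<lambda>x. C * W 0 x * (1-x) powr n) integrable_on {0..1}"
  shows "((\<lambda>e. integral {0..1} (\<lambda>x. \<phi> (e*(1-x)/(1+e)) / e powr n * W e x))
           \<longlongrightarrow> integral {0..1} (\<lambda>x. C * W 0 x * (1-x) powr n)) (at_right 0)"
proof (rule int_lim[OF _ gi])
  define KW where "KW e x = gfun \<phi> n C (e * (1 - x) / (1 + e)) * (1 + e) powr (-n) * W e x" for e x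
  have KWc: "continuous_on ({0..1} \<times> {0..1}) (\<lambda>p. KW (fst p) (snd p))"
    unfolding KW_def by (rule KW_cont[OF g_cont[OF phi lim] W])
  have KW0: "KW 0 x = C * W 0 x" for x by (simp add: KW_def gfun_def)
  have ev01: "\<forall>\<^sub>F e in at_right (0::real). 0 < e \<and> e < 1"
    unfolding eventually_at_right_field by (intro exI[of _ 1]) auto
  have Wx: "continuous_on {0..1} (W e)" if "e \<in> {0..1}" for e
  proof -
    have "continuous_on {0..1} (\<lambda>x. (\<lambda>p. W (fst p) (snd p)) (e, x))"
      by (rule continuous_on_compose2[OF W]) (use that in \<open>auto intro!: continuous_intros\<close>)
    then show ?thesis by simp
  qed
  show "\<forall>\<^sub>F e in at_right 0. (\<lambda>x. \<phi> (e*(1-x)/(1+e)) / e powr n * W e x) integrable_on {0..1}"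
    using ev01
  proof eventually_elim
    case (elim e)
    have "continuous_on {0..1} (\<lambda>x. \<phi> (e*(1-x)/(1+e)) / e powr n * W e x)"
      by (intro continuous_intros phi_cont[OF phi] Wx) (use elim in auto)
    then show ?case by (rule integrable_continuous_interval[where a=0 and b=1, simplified])
  qed
  fix \<eta> :: real assume eta: "\<eta> > 0"
  show "\<forall>\<^sub>F e in at_right 0. \<forall>x\<in>{0..<1}.
          \<bar>\<phi> (e*(1-x)/(1+e)) / e powr n * W e x - C * W 0 x * (1-x) powr n\<bar> \<le> \<eta>"
    using ev01 unif2[OF KWc eta]
  proof eventually_elim
    case (elim e)
    show ?case
    proof
      fix x :: real assume x: "x \<in> {0..<1}"
      have eq: "\<phi> (e*(1-x)/(1+e)) / e powr n * W e x = KW e x * (1-x) powr n"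
        using g_rel[of e x \<phi> n C] elim x by (simp add: KW_def)
      have p1: "(1-x) powr n \<le> 1" "(1-x) powr n \<ge> 0" using x n by (auto intro: powr_le1)
      have "\<bar>KW e x - KW 0 x\<bar> < \<eta>" using elim x by auto
      then have "\<bar>KW e x - KW 0 x\<bar> * (1-x) powr n \<le> \<eta> * 1"
        using p1 eta by (intro mult_mono) auto
      then show "\<bar>\<phi> (e*(1-x)/(1+e)) / e powr n * W e x - C * W 0 x * (1-x) powr n\<bar> \<le> \<eta>"
        unfolding eq KW0[symmetric] using p1 by (simp add: abs_mult left_diff_distrib[symmetric])
    qed
  qed
qed

lemma beta_int1:
  assumes n: "n \<ge> 0"
  shows "((\<lambda>x. C * ((1 + 0 * x)^2 * sqrt (x * (2 + 0 * x))) * (1-x) powr n) has_integral (C * sqrt 2 * A_const n)) {0..1}"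
proof -
  have "((\<lambda>t. t powr (3/2 - 1) * (1 - t) powr ((n+1) - 1)) has_integral Beta (3/2) (n+1)) {0..1}"
    by (rule has_integral_Beta_real) (use n in auto)
  from has_integral_mult_right[OF this, of "C * sqrt 2"]
  have "((\<lambda>t. C * sqrt 2 * (t powr (3/2 - 1) * (1 - t) powr ((n+1) - 1))) has_integral C * sqrt 2 * A_const n) {0..1}"
    using Beta_A[OF n] by simp
  then show ?thesis
  proof (rule has_integral_eq[rotated])
    fix x :: real assume x: "x \<in> {0..1}"
    have "x powr (3/2 - 1) = sqrt x" using x by (simp add: powr_half_sqrt)
    then show "C * sqrt 2 * (x powr (3/2 - 1) * (1 - x) powr ((n+1) - 1)) =
       C * ((1 + 0 * x)^2 * sqrt (x * (2 + 0 * x))) * (1-x) powr n"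
      by (simp add: real_sqrt_mult)
  qed
qed

lemma beta_int2:
  assumes n: "n \<ge> 0"
  shows "((\<lambda>x. C * ((x * (2 + 0 * x)) * sqrt (x * (2 + 0 * x))) * (1-x) powr n) has_integral (C * (2 * sqrt 2) * B_const n)) {0..1}"
proof -
  have "((\<lambda>t. t powr (5/2 - 1) * (1 - t) powr ((n+1) - 1)) has_integral Beta (5/2) (n+1)) {0..1}"
    by (rule has_integral_Beta_real) (use n in auto)
  from has_integral_mult_right[OF this, of "C * (2 * sqrt 2)"]
  have "((\<lambda>t. C * (2 * sqrt 2) * (t powr (5/2 - 1) * (1 - t) powr ((n+1) - 1))) has_integral C * (2 * sqrt 2) * B_const n) {0..1}"
    using Beta_B[OF n] by simp
  then show ?thesis
  proof (rule has_integral_eq[rotated])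
    fix x :: real assume x: "x \<in> {0..1}"
    have "x powr (5/2 - 1) = x * sqrt x" using x powr32[of x] by simp
    then show "C * (2 * sqrt 2) * (x powr (5/2 - 1) * (1 - x) powr ((n+1) - 1)) =
       C * ((x * (2 + 0 * x)) * sqrt (x * (2 + 0 * x))) * (1-x) powr n"
      by (simp add: real_sqrt_mult)
  qed
qed

lemma K_c1:
  fixes n C :: real
  assumes n: "n \<ge> 0" and C: "C > 0"
  shows "(2 / 3) * (4 * sqrt 2 * pi * C) powr (- 2 / (2 * n + 3)) * B_const n
               * A_const n powr (- (2 * n + 5) / (2 * n + 3))
         * (4 * sqrt 2 * pi * C * A_const n) powr ((2 * n + 5) / (2 * n + 3))
        = 2 powr (3 / 2) * (4 / 3) * pi * C * B_const n"
proof -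
  define M where "M = 4 * sqrt 2 * pi * C"
  define A where "A = A_const n"
  define g where "g = (2 * n + 5) / (2 * n + 3)"
  have M: "M > 0" using C by (simp add: M_def)
  have A: "A > 0" using A_pos[OF n] by (simp add: A_def)
  have e1: "(M * A) powr g = M powr g * A powr g" using M A by (simp add: powr_mult)
  have e2: "A powr (- (2 * n + 5) / (2 * n + 3)) * A powr g = 1"
  proof -
    have "A powr (- (2 * n + 5) / (2 * n + 3)) * A powr g = A powr (- (2 * n + 5) / (2 * n + 3) + g)"
      by (rule powr_add[symmetric])
    also have "- (2 * n + 5) / (2 * n + 3) + g = 0" unfolding g_def using n by (simp add: add_divide_distrib[symmetric])
    finally show ?thesis using A by simp
  qed
  have e3: "M powr (- 2 / (2 * n + 3)) * M powr g = M"
  proof -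
    have "M powr (- 2 / (2 * n + 3)) * M powr g = M powr (- 2 / (2 * n + 3) + g)"
      by (rule powr_add[symmetric])
    also have "- 2 / (2 * n + 3) + g = 1" unfolding g_def using n by (simp add: diff_divide_distrib[symmetric])
    finally show ?thesis using M by simp
  qed
  have e4: "(2::real) powr (3/2) = 2 * sqrt 2" using powr32[of 2] by simp
  have "(2 / 3) * M powr (- 2 / (2 * n + 3)) * B_const n * A powr (- (2 * n + 5) / (2 * n + 3)) * (M * A) powr g
      = (2/3) * B_const n * (M powr (- 2 / (2 * n + 3)) * M powr g) * (A powr (- (2 * n + 5) / (2 * n + 3)) * A powr g)"
    unfolding e1 by (simp only: ac_simps)
  also have "\<dots> = (2/3) * B_const n * M" unfolding e2 e3 by simp
  finally show ?thesis
    unfolding M_def[symmetric] A_def[symmetric] g_def[symmetric] e4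
    by (simp add: M_def algebra_simps)
qed

theorem mainTheorem9:
  fixes E0 n C :: real and \<phi> :: "real \<Rightarrow> real"
  assumes "E0 > 0" and "n \<ge> 0" and "C > 0"
    and "\<And>x. x \<le> 1 \<Longrightarrow> \<phi> x \<ge> 0"
    and "continuous_on {0..1} \<phi>"
    and "\<And>x. x < 0 \<Longrightarrow> \<phi> x = 0"
    and "((\<lambda>x. \<phi> x / x powr n) \<longlongrightarrow> C) (at_right 0)"
  shows "((\<lambda>V. rho_fn E0 \<phi> V /
            (4 * sqrt 2 * pi * C * A_const n * (E0 / V - 1) powr (n + 3 / 2)))
           \<longlongrightarrow> 1) (at_left E0)
    \<and> ((\<lambda>V. p_fn E0 \<phi> V /
            (2 powr (3 / 2) * (4 / 3) * pi * C * B_const n * (E0 / V - 1) powr (n + 5 / 2)))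
           \<longlongrightarrow> 1) (at_left E0)
    \<and> ((\<lambda>V. p_fn E0 \<phi> V /
            ((2 / 3) * (4 * sqrt 2 * pi * C) powr (- 2 / (2 * n + 3)) * B_const n
               * A_const n powr (- (2 * n + 5) / (2 * n + 3))
               * rho_fn E0 \<phi> V powr ((2 * n + 5) / (2 * n + 3))))
           \<longlongrightarrow> 1) (at_left E0)"
proof -
  note E0 = assms(1) and n = assms(2) and C = assms(3) and phi = assms(5) and lim = assms(7)
  have A: "A_const n > 0" using A_pos[OF n] .
  have B: "B_const n > 0" using B_pos[OF n] .
  define I1 where "I1 e = integral {0..1} (\<lambda>x. \<phi> (e*(1-x)/(1+e)) / e powr n * ((1+e*x)^2 * sqrt (x*(2+e*x))))" for e
  define I2 where "I2 e = integral {0..1} (\<lambda>x. \<phi> (e*(1-x)/(1+e)) / e powr n * ((x*(2+e*x)) * sqrt (x*(2+e*x))))" for e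
  have L1: "(I1 \<longlongrightarrow> C * sqrt 2 * A_const n) (at_right 0)"
  proof -
    have "(I1 \<longlongrightarrow> integral {0..1} (\<lambda>x. C * ((1 + 0 * x)^2 * sqrt (x * (2 + 0 * x))) * (1-x) powr n)) (at_right 0)"
      unfolding I1_def
      by (rule int_R_lim[OF phi lim n, where W="\<lambda>e x. (1+e*x)^2 * sqrt (x*(2+e*x))"])
         (use beta_int1[OF n, of C] in \<open>auto intro!: continuous_intros\<close>)
    then show ?thesis using beta_int1[OF n, of C] by (simp add: integral_unique)
  qed
  have L2: "(I2 \<longlongrightarrow> C * (2 * sqrt 2) * B_const n) (at_right 0)"
  proof -
    have "(I2 \<longlongrightarrow> integral {0..1} (\<lambda>x. C * ((x * (2 + 0 * x)) * sqrt (x * (2 + 0 * x))) * (1-x) powr n)) (at_right 0)"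
      unfolding I2_def
      by (rule int_R_lim[OF phi lim n, where W="\<lambda>e x. (x*(2+e*x)) * sqrt (x*(2+e*x))"])
         (use beta_int2[OF n, of C] in \<open>auto intro!: continuous_intros\<close>)
    then show ?thesis using beta_int2[OF n, of C] by (simp add: integral_unique)
  qed
  have flim: "filterlim (\<lambda>V. E0 / V - 1) (at_right 0) (at_left E0)"
  proof -
    have "((\<lambda>V. E0 / V - 1) \<longlongrightarrow> E0 / E0 - 1) (at_left E0)"
      using E0 by (intro tendsto_intros) auto
    then have t: "((\<lambda>V. E0 / V - 1) \<longlongrightarrow> 0) (at_left E0)" using E0 by simp
    have "\<forall>\<^sub>F V in at_left E0. 0 < V \<and> V < E0"
      unfolding eventually_at_left_field using E0 by (intro exI[of _ 0]) auto
    then have "\<forall>\<^sub>F V in at_left E0. E0 / V - 1 \<in> {0<..} \<and> E0 / V - 1 \<noteq> 0"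
      by eventually_elim (auto simp: field_simps)
    with t show ?thesis by (simp add: filterlim_at)
  qed
  have evV: "\<forall>\<^sub>F V in at_left E0. 0 < V \<and> V < E0"
    unfolding eventually_at_left_field using E0 by (intro exI[of _ 0]) auto
  have ev_e: "0 < E0 / V - 1" "E0 = V * (1 + (E0 / V - 1))" if "0 < V" "V < E0" for V
    using that by (auto simp: field_simps)
  define u where "u V = rho_fn E0 \<phi> V / (4 * sqrt 2 * pi * C * A_const n * (E0 / V - 1) powr (n + 3 / 2))" for V
  define w where "w V = p_fn E0 \<phi> V / (2 powr (3 / 2) * (4 / 3) * pi * C * B_const n * (E0 / V - 1) powr (n + 5 / 2))" for V
  have T1: "(u \<longlongrightarrow> 1) (at_left E0)"
  proof -
    have "((\<lambda>e. I1 e / (C * sqrt 2 * A_const n)) \<longlongrightarrow> 1) (at_right 0)"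
      using tendsto_divide[OF L1 tendsto_const[of "C * sqrt 2 * A_const n"]] A C by simp
    from filterlim_compose[OF this flim]
    have "((\<lambda>V. I1 (E0 / V - 1) / (C * sqrt 2 * A_const n)) \<longlongrightarrow> 1) (at_left E0)" .
    moreover have "\<forall>\<^sub>F V in at_left E0. I1 (E0 / V - 1) / (C * sqrt 2 * A_const n) = u V"
      using evV
    proof eventually_elim
      case (elim V)
      define e where "e = E0 / V - 1"
      have e: "e > 0" "E0 = V * (1 + e)" using ev_e[of V] elim by (auto simp: e_def)
      have r: "rho_fn E0 \<phi> V = 4*pi * e powr (n+3/2) * I1 e"
        unfolding I1_def by (rule rho_repr[OF _ e(1) e(2) phi]) (use elim in auto)
      have "e powr (n+3/2) > 0" using e by simp
      then show ?case unfolding u_def e_def[symmetric] r using A C by (simp add: field_simps)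
    qed
    ultimately show ?thesis by (rule tendsto_cong[THEN iffD1, rotated])
  qed
  have T2: "(w \<longlongrightarrow> 1) (at_left E0)"
  proof -
    have "((\<lambda>e. I2 e / (C * (2 * sqrt 2) * B_const n)) \<longlongrightarrow> 1) (at_right 0)"
      using tendsto_divide[OF L2 tendsto_const[of "C * (2 * sqrt 2) * B_const n"]] B C by simp
    from filterlim_compose[OF this flim]
    have "((\<lambda>V. I2 (E0 / V - 1) / (C * (2 * sqrt 2) * B_const n)) \<longlongrightarrow> 1) (at_left E0)" .
    moreover have "\<forall>\<^sub>F V in at_left E0. I2 (E0 / V - 1) / (C * (2 * sqrt 2) * B_const n) = w V"
      using evV
    proof eventually_elim
      case (elim V)
      define e where "e = E0 / V - 1"
      have e: "e > 0" "E0 = V * (1 + e)" using ev_e[of V] elim by (auto simp: e_def)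
      have r: "p_fn E0 \<phi> V = 4*pi/3 * e powr (n+5/2) * I2 e"
        unfolding I2_def by (rule p_repr[OF _ e(1) e(2) phi]) (use elim in auto)
      have "e powr (n+5/2) > 0" using e by simp
      moreover have "(2::real) powr (3/2) = 2 * sqrt 2" using powr32[of 2] by simp
      ultimately show ?case unfolding w_def e_def[symmetric] r using B C by (simp add: field_simps)
    qed
    ultimately show ?thesis by (rule tendsto_cong[THEN iffD1, rotated])
  qed
  define g where "g = (2 * n + 5) / (2 * n + 3)"
  define K where "K = (2 / 3) * (4 * sqrt 2 * pi * C) powr (- 2 / (2 * n + 3)) * B_const n
               * A_const n powr (- (2 * n + 5) / (2 * n + 3))"
  define c1 where "c1 = 4 * sqrt 2 * pi * C * A_const n"
  define c2 where "c2 = 2 powr (3 / 2) * (4 / 3) * pi * C * B_const n"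
  have c1: "c1 > 0" unfolding c1_def using A C by simp
  have c2: "c2 > 0" unfolding c2_def using B C by simp
  have Kc: "K * c1 powr g = c2" unfolding K_def c1_def c2_def g_def using K_c1[OF n C] .
  have ag: "(n + 3/2) * g = n + 5/2" unfolding g_def using n by (simp add: field_simps)
  have T3: "((\<lambda>V. w V / u V powr g) \<longlongrightarrow> 1) (at_left E0)"
  proof -
    have "((\<lambda>V. u V powr g) \<longlongrightarrow> 1 powr g) (at_left E0)"
      by (rule tendsto_powr[OF T1 tendsto_const]) simp
    from tendsto_divide[OF T2 this] show ?thesis by simp
  qed
  have upos: "\<forall>\<^sub>F V in at_left E0. u V > 0"
    using order_tendstoD(1)[OF T1, of 0] by simp
  have "\<forall>\<^sub>F V in at_left E0. w V / u V powr g = p_fn E0 \<phi> V / (K * rho_fn E0 \<phi> V powr g)"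
    using evV upos
  proof eventually_elim
    case (elim V)
    define e where "e = E0 / V - 1"
    have e: "e > 0" using ev_e[of V] elim by (auto simp: e_def)
    have ea: "e powr (n+3/2) > 0" "e powr (n+5/2) > 0" using e by auto
    have u': "u V = rho_fn E0 \<phi> V / (c1 * e powr (n+3/2))" unfolding u_def c1_def e_def by simp
    have w': "w V = p_fn E0 \<phi> V / (c2 * e powr (n+5/2))" unfolding w_def c2_def e_def by simp
    have r: "rho_fn E0 \<phi> V = c1 * e powr (n+3/2) * u V"
      unfolding u' using ea c1 by simp
    have p: "p_fn E0 \<phi> V = c2 * e powr (n+5/2) * w V"
      unfolding w' using ea c2 by simp
    have "rho_fn E0 \<phi> V powr g = c1 powr g * (e powr (n+3/2)) powr g * u V powr g"
      unfolding r using c1 ea elim by (simp add: powr_mult)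
    also have "(e powr (n+3/2)) powr g = e powr (n+5/2)" by (simp add: powr_powr ag)
    finally have "K * rho_fn E0 \<phi> V powr g = c2 * e powr (n+5/2) * u V powr g"
      using Kc by (simp add: ac_simps)
    then show ?case unfolding p using c2 ea elim by simp
  qed
  with T3 have T3': "((\<lambda>V. p_fn E0 \<phi> V / (K * rho_fn E0 \<phi> V powr g)) \<longlongrightarrow> 1) (at_left E0)"
    by (rule tendsto_cong[THEN iffD1, rotated])
  show ?thesis using T1 T2 T3' unfolding u_def w_def K_def g_def by simp
qed

end
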